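(* For all integers $1\le k\le n$, \[ \mathbb{P}_n(S_k)=\frac{1}{2}\left(1-\frac{k-1}{n}\right), \] i.e. the probability that the $k$-th boundary step of a uniformly random type-B permutation tableau of size $n$ is a south step equals $\frac12\bigl(1-\frac{k-1}{n}\bigr)$.
   Context: A Ferrers diagram is a left-justified array of cells whose row lengths weakly decrease from top to bottom (rows of length $0$ are allowed). Its half-perimeter is the number of rows plus the number of columns. Its southeast boundary, traversed from the northeast corner to the southwest corner, consists of $n$ unit steps, each south or west; south steps correspond to rows and west steps to columns. We write $S_k$ (resp. $W_k$) for the event that the $k$-th step is south (resp. west). If the diagram has $c$ columns, the shifted Ferrers diagram is obtained by inserting $c$ new left-justified rows above it, of lengths $c,c-1,\dots,1$ from top to bottom; the rightmost cell of each inserted row is a diagonal cell. A type-B permutation tableau of size $n$ is a filling of a shifted Ferrers diagram of half-perimeter $n$ with $0$'s and $1$'s such that: (1) every column contains at least one $1$; (2) no $0$ has both a $1$ above it in its column and a $1$ to its left in its row; (3) if a diagonal cell contains $0$ then every cell of its row contains $0$. The boundary steps of the shifted diagram are those of the underlying Ferrers diagram. Let $\mathcal{B}_n$ be the set of such tableaux, and $\mathbb{P}_n$ the uniform probability measure on $\mathcal{B}_n$. *)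

theory Defs
  imports Complex_Main
begin

text \<open>Boundary word of a Ferrers diagram of half-perimeter n: a list w of length n,
  traversed from the NE corner to the SW corner; True = south step (a row),
  False = west step (a column).  Step k (1-based) is w ! (k-1).\<close>

definition ncols :: "bool list \<Rightarrow> nat" where
  "ncols w = length (filter Not w)"

definition ferrers_rowlens :: "bool list \<Rightarrow> nat list" where
  "ferrers_rowlens w =
     map (\<lambda>i. length (filter Not (drop (Suc i) w))) (filter (\<lambda>i. w ! i) [0..<length w])"

definition shifted_rowlens :: "bool list \<Rightarrow> nat list" where
  "shifted_rowlens w = map (\<lambda>i. Suc i) [0..<ncols w] @ ferrers_rowlens w"

text \<open>Cells (i,j): row i from the top, column j from the left, both 0-based.\<close>
definition shifted_cells :: "bool list \<Rightarrow> (nat \<times> nat) set" where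
  "shifted_cells w = {(i, j). i < length (shifted_rowlens w) \<and> j < shifted_rowlens w ! i}"

text \<open>A filling is given by the set Ones of cells containing 1 (all other cells contain 0).
  The diagonal cell of inserted row i (i < c) is its rightmost cell (i, i).\<close>
definition is_typeB_tableau :: "bool list \<Rightarrow> (nat \<times> nat) set \<Rightarrow> bool" where
  "is_typeB_tableau w Ones \<longleftrightarrow>
     Ones \<subseteq> shifted_cells w \<and>
     (\<forall>j < ncols w. \<exists>i. (i, j) \<in> Ones) \<and>
     (\<forall>i j. (i, j) \<in> shifted_cells w \<and> (i, j) \<notin> Ones \<longrightarrow>
            \<not> ((\<exists>i' < i. (i', j) \<in> Ones) \<and> (\<exists>j' < j. (i, j') \<in> Ones))) \<and>
     (\<forall>i < ncols w. (i, i) \<notin> Ones \<longrightarrow> (\<forall>j. (i, j) \<notin> Ones))"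

definition typeB_tableaux :: "nat \<Rightarrow> (bool list \<times> (nat \<times> nat) set) set" where
  "typeB_tableaux n = {(w, Ones). length w = n \<and> is_typeB_tableau w Ones}"

definition prob_S :: "nat \<Rightarrow> nat \<Rightarrow> real" where
  "prob_S n k = real (card {T \<in> typeB_tableaux n. fst T ! (k - 1)}) / real (card (typeB_tableaux n))"

end

theory Submission
  imports Defs
begin

lemma ncols_Nil[simp]: "ncols [] = 0" by (simp add: ncols_def)
lemma ncols_Cons[simp]: "ncols (b # w) = (if b then ncols w else Suc (ncols w))"
  by (simp add: ncols_def)
lemma ncols_append[simp]: "ncols (u @ v) = ncols u + ncols v"
  by (simp add: ncols_def)

lemma ferrers_Nil[simp]: "ferrers_rowlens [] = []" by (simp add: ferrers_rowlens_def)

lemma ferrers_Cons[simp]: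
  "ferrers_rowlens (b # w) = (if b then [ncols w] else []) @ ferrers_rowlens w"
proof -
  have u: "[0..<Suc (length w)] = 0 # map Suc [0..<length w]"
    by (simp only: map_Suc_upt upt_conv_Cons[OF zero_less_Suc])
  show ?thesis
    unfolding ferrers_rowlens_def length_Cons u
    by (simp add: filter_map comp_def ncols_def del: upt_Suc)
qed

lemma ferrers_append[simp]:
  "ferrers_rowlens (u @ v) = map (\<lambda>x. x + ncols v) (ferrers_rowlens u) @ ferrers_rowlens v"
  by (induction u) auto

lemma ferrers_le: "x \<in> set (ferrers_rowlens w) \<Longrightarrow> x \<le> ncols w"
  by (induction w) (auto split: if_splits)

definition cellsL :: "nat list \<Rightarrow> (nat \<times> nat) set" where
  "cellsL l = {(i, j). i < length l \<and> j < l ! i}"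

definition rule2 :: "(nat \<times> nat) set \<Rightarrow> (nat \<times> nat) set \<Rightarrow> bool" where
  "rule2 C Q \<longleftrightarrow> (\<forall>i j. (i, j) \<in> C \<and> (i, j) \<notin> Q \<longrightarrow>
            \<not> ((\<exists>i' < i. (i', j) \<in> Q) \<and> (\<exists>j' < j. (i, j') \<in> Q)))"

definition valid :: "(nat \<times> nat) set \<Rightarrow> nat set \<Rightarrow> nat set \<Rightarrow> (nat \<times> nat) set \<Rightarrow> bool" where
  "valid C K D Q \<longleftrightarrow> Q \<subseteq> C \<and> (\<forall>j\<in>K. \<exists>i. (i, j) \<in> Q) \<and> rule2 C Q \<and>
      (\<forall>i\<in>D. (i, i) \<notin> Q \<longrightarrow> (\<forall>j. (i, j) \<notin> Q))"

lemma shifted_rowlens_eq: "shifted_rowlens w = map Suc [0..<ncols w] @ ferrers_rowlens w"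
  by (simp add: shifted_rowlens_def)

lemma typeB_valid:
  "is_typeB_tableau w Q \<longleftrightarrow> valid (cellsL (shifted_rowlens w)) {..<ncols w} {..<ncols w} Q"
  unfolding is_typeB_tableau_def valid_def rule2_def shifted_cells_def cellsL_def
  by auto

lemma embed_valid:
  fixes f g :: "nat \<Rightarrow> nat"
  assumes sf: "strict_mono f" and sg: "strict_mono g"
    and cells: "\<And>i j. (i, j) \<in> C' \<longleftrightarrow> (f i, g j) \<in> C"
    and K: "K = g ` K'"
    and D: "D \<inter> range f = f ` D'" and fg: "\<And>i. i \<in> D' \<Longrightarrow> g i = f i"
  shows "valid C K D (map_prod f g ` Q') \<longleftrightarrow> valid C' K' D' Q'"
proof -
  let ?h = "map_prod f g"
  let ?Q = "?h ` Q'"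
  have injf: "inj f" using sf strict_mono_imp_inj_on by blast
  have injg: "inj g" using sg strict_mono_imp_inj_on by blast
  have mem: "(f a, g b) \<in> ?Q \<longleftrightarrow> (a, b) \<in> Q'" for a b
    using injf injg by (auto simp: inj_eq)
  have memO: "(x, y) \<in> ?Q \<longleftrightarrow> (\<exists>a b. x = f a \<and> y = g b \<and> (a, b) \<in> Q')" for x y
    by auto
  have lf: "f a < f b \<longleftrightarrow> a < b" for a b using sf by (simp add: strict_mono_less)
  have lg: "g a < g b \<longleftrightarrow> a < b" for a b using sg by (simp add: strict_mono_less)
  have s1: "?Q \<subseteq> C \<longleftrightarrow> Q' \<subseteq> C'"
    using cells by auto
  have s2: "(\<forall>j\<in>K. \<exists>i. (i, j) \<in> ?Q) \<longleftrightarrow> (\<forall>j\<in>K'. \<exists>i. (i, j) \<in> Q')"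
    unfolding K using mem memO injg by (auto simp: inj_eq)
  have s3: "rule2 C ?Q \<longleftrightarrow> rule2 C' Q'"
  proof
    assume r: "rule2 C ?Q"
    show "rule2 C' Q'"
      unfolding rule2_def
    proof (intro allI impI notI)
      fix i j
      assume a: "(i, j) \<in> C' \<and> (i, j) \<notin> Q'" and
        b: "(\<exists>i'<i. (i', j) \<in> Q') \<and> (\<exists>j'<j. (i, j') \<in> Q')"
      from b obtain i' j' where "i' < i" "(i', j) \<in> Q'" "j' < j" "(i, j') \<in> Q'" by blast
      then have "(\<exists>i''<f i. (i'', g j) \<in> ?Q) \<and> (\<exists>j''<g j. (f i, j'') \<in> ?Q)"
        using lf lg mem by blast
      moreover have "(f i, g j) \<in> C" "(f i, g j) \<notin> ?Q" using a cells mem by auto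
      ultimately show False using r[unfolded rule2_def, rule_format, of "f i" "g j"] by argo
    qed
  next
    assume r: "rule2 C' Q'"
    show "rule2 C ?Q"
      unfolding rule2_def
    proof (intro allI impI notI)
      fix x y
      assume a: "(x, y) \<in> C \<and> (x, y) \<notin> ?Q" and
        b: "(\<exists>i'<x. (i', y) \<in> ?Q) \<and> (\<exists>j'<y. (x, j') \<in> ?Q)"
      from b obtain i' j' where 1: "i' < x" "(i', y) \<in> ?Q" "j' < y" "(x, j') \<in> ?Q" by blast
      from 1 obtain a0 b0 where "i' = f a0" "y = g b0" "(a0, b0) \<in> Q'" using memO by blast
      moreover from 1 obtain a1 b1 where "x = f a1" "j' = g b1" "(a1, b1) \<in> Q'" using memO by blast
      ultimately have "a0 < a1" "b1 < b0" "(a1, b0) \<in> C'" "(a1, b0) \<notin> Q'"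
        using 1 a lf lg cells mem by auto
      then show False using r \<open>(a0, b0) \<in> Q'\<close> \<open>(a1, b1) \<in> Q'\<close> unfolding rule2_def by blast
    qed
  qed
  have s4: "(\<forall>i\<in>D. (i, i) \<notin> ?Q \<longrightarrow> (\<forall>j. (i, j) \<notin> ?Q)) \<longleftrightarrow>
            (\<forall>i\<in>D'. (i, i) \<notin> Q' \<longrightarrow> (\<forall>j. (i, j) \<notin> Q'))"
  proof
    assume r: "\<forall>i\<in>D. (i, i) \<notin> ?Q \<longrightarrow> (\<forall>j. (i, j) \<notin> ?Q)"
    show "\<forall>i\<in>D'. (i, i) \<notin> Q' \<longrightarrow> (\<forall>j. (i, j) \<notin> Q')"
    proof (intro ballI impI allI)
      fix i j assume i: "i \<in> D'" and n: "(i, i) \<notin> Q'"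
      have "f i \<in> D" using D i by auto
      moreover have "(f i, f i) \<notin> ?Q" using n mem fg[OF i] by metis
      ultimately have "(f i, g j) \<notin> ?Q" using r by meson
      then show "(i, j) \<notin> Q'" using mem by blast
    qed
  next
    assume r: "\<forall>i\<in>D'. (i, i) \<notin> Q' \<longrightarrow> (\<forall>j. (i, j) \<notin> Q')"
    show "\<forall>i\<in>D. (i, i) \<notin> ?Q \<longrightarrow> (\<forall>j. (i, j) \<notin> ?Q)"
    proof (intro ballI impI allI)
      fix x y assume x: "x \<in> D" and n: "(x, x) \<notin> ?Q"
      show "(x, y) \<notin> ?Q"
      proof
        assume "(x, y) \<in> ?Q"
        then obtain a b where ab: "x = f a" "y = g b" "(a, b) \<in> Q'" using memO by blast
        then have "x \<in> D \<inter> range f" using x by simp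
        then obtain i where i: "i \<in> D'" "x = f i" using D by auto
        then have "a = i" using ab injf by (auto simp: inj_eq)
        have "(i, i) \<notin> Q'" using n mem fg[OF i(1)] i(2) by metis
        then show False using r i(1) ab \<open>a = i\<close> by blast
      qed
    qed
  qed
  show ?thesis unfolding valid_def s1 s2 s3 s4 by (rule refl)
qed

lemma card_embed:
  fixes f g :: "nat \<Rightarrow> nat"
  assumes sf: "strict_mono f" and sg: "strict_mono g"
    and cells: "\<And>i j. (i, j) \<in> C' \<longleftrightarrow> (f i, g j) \<in> C"
    and K: "K = g ` K'"
    and D: "D \<inter> range f = f ` D'" and fg: "\<And>i. i \<in> D' \<Longrightarrow> g i = f i"
  shows "card {Q. valid C K D Q \<and> Q \<subseteq> range (map_prod f g)} = card {Q'. valid C' K' D' Q'}"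
proof -
  let ?h = "map_prod f g"
  have "inj f" "inj g" using sf sg strict_mono_imp_inj_on by blast+
  then have injh: "inj ?h" using map_prod_inj_on[of f UNIV g UNIV] by simp
  have "bij_betw (image ?h) {Q'. valid C' K' D' Q'} {Q. valid C K D Q \<and> Q \<subseteq> range ?h}"
  proof (rule bij_betwI')
    show "\<And>x y. x \<in> {Q'. valid C' K' D' Q'} \<Longrightarrow> y \<in> {Q'. valid C' K' D' Q'} \<Longrightarrow>
        (?h ` x = ?h ` y) = (x = y)"
      using injh by (simp add: inj_image_eq_iff)
    show "\<And>x. x \<in> {Q'. valid C' K' D' Q'} \<Longrightarrow> ?h ` x \<in> {Q. valid C K D Q \<and> Q \<subseteq> range ?h}"
      using embed_valid[OF assms] by blast
    show "\<exists>x\<in>{Q'. valid C' K' D' Q'}. y = ?h ` x" if "y \<in> {Q. valid C K D Q \<and> Q \<subseteq> range ?h}" for y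
    proof -
      have y: "valid C K D y" "y \<subseteq> range ?h" using that by blast+
      have e': "?h ` (?h -` y) = y" using y(2) by (simp only: image_vimage_eq Int_absorb2)
      have e: "y = ?h ` (?h -` y)" using e' by (rule sym)
      have "valid C K D (?h ` (?h -` y))" using y(1) by (simp only: e')
      then have "valid C' K' D' (?h -` y)"
        using embed_valid[OF assms, of "?h -` y"] by blast
      then show ?thesis using e by blast
    qed
  qed
  then show ?thesis by (simp add: bij_betw_same_card)
qed

lemma finite_valid: "finite C \<Longrightarrow> finite {Q. valid C K D Q}"
  by (rule finite_subset[of _ "Pow C"]) (auto simp: valid_def)

lemma corner_rule2:
  assumes "(R, p) \<notin> Q"
    and colp: "\<And>i. (i, p) \<in> C2 \<Longrightarrow> i < R" and rowR: "\<And>j. (R, j) \<in> C2 \<Longrightarrow> j < p"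
  shows "rule2 (insert (R, p) C2) (insert (R, p) Q) \<longleftrightarrow> rule2 C2 Q"
proof
  assume r: "rule2 (insert (R, p) C2) (insert (R, p) Q)"
  show "rule2 C2 Q" unfolding rule2_def
  proof (intro allI impI notI)
    fix i j assume a: "(i, j) \<in> C2 \<and> (i, j) \<notin> Q"
      and b: "(\<exists>i'<i. (i', j) \<in> Q) \<and> (\<exists>j'<j. (i, j') \<in> Q)"
    have "(i, j) \<noteq> (R, p)" using a colp by blast
    then have "(i, j) \<in> insert (R, p) C2 \<and> (i, j) \<notin> insert (R, p) Q" using a by simp
    moreover have "(\<exists>i'<i. (i', j) \<in> insert (R, p) Q) \<and> (\<exists>j'<j. (i, j') \<in> insert (R, p) Q)"
      using b by blast
    ultimately show False using r[unfolded rule2_def, rule_format, of i j] by argo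
  qed
next
  assume r: "rule2 C2 Q"
  show "rule2 (insert (R, p) C2) (insert (R, p) Q)" unfolding rule2_def
  proof (intro allI impI notI)
    fix i j assume a: "(i, j) \<in> insert (R, p) C2 \<and> (i, j) \<notin> insert (R, p) Q"
      and b: "(\<exists>i'<i. (i', j) \<in> insert (R, p) Q) \<and> (\<exists>j'<j. (i, j') \<in> insert (R, p) Q)"
    have c: "(i, j) \<in> C2" "(i, j) \<notin> Q" "(i, j) \<noteq> (R, p)" using a by auto
    from b obtain i' j' where 1: "i' < i" "(i', j) \<in> insert (R, p) Q" "j' < j" "(i, j') \<in> insert (R, p) Q"
      by blast
    have "(i', j) \<noteq> (R, p)"
    proof
      assume "(i', j) = (R, p)" then have "j = p" "R < i" using 1 by auto
      then show False using colp c(1) by fastforce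
    qed
    moreover have "(i, j') \<noteq> (R, p)"
    proof
      assume "(i, j') = (R, p)" then have "i = R" "p < j" using 1 by auto
      then show False using rowR c(1) by fastforce
    qed
    ultimately have "(i', j) \<in> Q" "(i, j') \<in> Q" using 1 by auto
    then show False using r[unfolded rule2_def, rule_format, of i j] c 1 by blast
  qed
qed

lemma cornerA:
  assumes C1: "C1 = insert (R, p) C2" and nx: "(R, p) \<notin> C2"
    and colp: "\<And>i. (i, p) \<in> C2 \<Longrightarrow> i < R" and rowR: "\<And>j. (R, j) \<in> C2 \<Longrightarrow> j < p"
    and pK: "p \<in> K" and RD: "R \<notin> D" and fin: "finite C1"
  shows "card {Q. valid C1 K D Q} =
     card {Q. valid C2 K D Q \<and> (\<forall>j. (R, j) \<notin> Q)} + card {Q. valid C2 (K - {p}) D Q}"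
proof -
  let ?x = "(R, p)"
  let ?S = "{Q. valid C1 K D Q}"
  have finS: "finite ?S" using finite_valid[OF fin] .
  have e0: "{Q \<in> ?S. ?x \<notin> Q} = {Q. valid C2 K D Q \<and> (\<forall>j. (R, j) \<notin> Q)}"
  proof (intro set_eqI iffI)
    fix Q assume "Q \<in> {Q \<in> ?S. ?x \<notin> Q}"
    then have v: "valid C1 K D Q" and nq: "?x \<notin> Q" by auto
    have sub: "Q \<subseteq> C2" using v nq C1 unfolding valid_def by blast
    obtain i where i: "(i, p) \<in> Q" using v pK unfolding valid_def by blast
    have "i < R" using colp sub i by blast
    have r1: "rule2 C1 Q" using v unfolding valid_def by blast
    have "?x \<in> C1" using C1 by simp
    then have nrow: "\<not> (\<exists>j'<p. (R, j') \<in> Q)"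
      using r1[unfolded rule2_def, rule_format, of R p] nq i \<open>i < R\<close> by blast
    have row: "\<forall>j. (R, j) \<notin> Q"
    proof (intro allI notI)
      fix j assume "(R, j) \<in> Q" then have "j < p" using rowR sub by blast
      then show False using nrow \<open>(R, j) \<in> Q\<close> by blast
    qed
    have "rule2 C2 Q" using r1 C1 unfolding rule2_def by blast
    then have "valid C2 K D Q" using v sub unfolding valid_def by blast
    then show "Q \<in> {Q. valid C2 K D Q \<and> (\<forall>j. (R, j) \<notin> Q)}" using row by blast
  next
    fix Q assume "Q \<in> {Q. valid C2 K D Q \<and> (\<forall>j. (R, j) \<notin> Q)}"
    then have v: "valid C2 K D Q" and row: "\<forall>j. (R, j) \<notin> Q" by auto
    have "rule2 C1 Q" using v row C1 unfolding valid_def rule2_def by blast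
    then have "valid C1 K D Q" using v C1 unfolding valid_def by blast
    then show "Q \<in> {Q \<in> ?S. ?x \<notin> Q}" using row by blast
  qed
  have e1: "{Q \<in> ?S. ?x \<in> Q} = insert ?x ` {Q. valid C2 (K - {p}) D Q}"
  proof (intro set_eqI iffI)
    fix Q assume "Q \<in> {Q \<in> ?S. ?x \<in> Q}"
    then have v: "valid C1 K D Q" and xq: "?x \<in> Q" by auto
    let ?Q0 = "Q - {?x}"
    have eq: "Q = insert ?x ?Q0" using xq by blast
    have n0: "?x \<notin> ?Q0" by blast
    have sub: "?Q0 \<subseteq> C2" using v C1 unfolding valid_def by blast
    have "rule2 C1 Q" using v unfolding valid_def by blast
    then have "rule2 C2 ?Q0" using corner_rule2[OF n0 colp rowR] eq C1 by metis
    moreover have "\<forall>j\<in>K - {p}. \<exists>i. (i, j) \<in> ?Q0" using v unfolding valid_def by blast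
    moreover have "\<forall>i\<in>D. (i, i) \<notin> ?Q0 \<longrightarrow> (\<forall>j. (i, j) \<notin> ?Q0)"
      using v RD unfolding valid_def by blast
    ultimately have "valid C2 (K - {p}) D ?Q0" using sub unfolding valid_def by blast
    then show "Q \<in> insert ?x ` {Q. valid C2 (K - {p}) D Q}" using eq by blast
  next
    fix Q assume "Q \<in> insert ?x ` {Q. valid C2 (K - {p}) D Q}"
    then obtain Q0 where Q: "Q = insert ?x Q0" and v: "valid C2 (K - {p}) D Q0" by blast
    have n0: "?x \<notin> Q0" using v nx unfolding valid_def by blast
    have "rule2 C2 Q0" using v unfolding valid_def by blast
    then have "rule2 C1 Q" using corner_rule2[OF n0 colp rowR] Q C1 by metis
    moreover have "Q \<subseteq> C1" using v Q C1 unfolding valid_def by blast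
    moreover have "\<forall>j\<in>K. \<exists>i. (i, j) \<in> Q" using v Q unfolding valid_def by blast
    moreover have "\<forall>i\<in>D. (i, i) \<notin> Q \<longrightarrow> (\<forall>j. (i, j) \<notin> Q)"
      using v RD Q unfolding valid_def by blast
    ultimately have "valid C1 K D Q" unfolding valid_def by blast
    then show "Q \<in> {Q \<in> ?S. ?x \<in> Q}" using Q by blast
  qed
  have inj: "inj_on (insert ?x) {Q. valid C2 (K - {p}) D Q}"
  proof (rule inj_onI)
    fix A B assume "A \<in> {Q. valid C2 (K - {p}) D Q}" "B \<in> {Q. valid C2 (K - {p}) D Q}"
      "insert ?x A = insert ?x B"
    moreover have "?x \<notin> A" "?x \<notin> B" using calculation nx unfolding valid_def by blast+
    ultimately show "A = B" by (metis insert_ident)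
  qed
  have "card ?S = card {Q \<in> ?S. ?x \<notin> Q} + card {Q \<in> ?S. ?x \<in> Q}"
  proof -
    have "?S = {Q \<in> ?S. ?x \<notin> Q} \<union> {Q \<in> ?S. ?x \<in> Q}" by blast
    moreover have "{Q \<in> ?S. ?x \<notin> Q} \<inter> {Q \<in> ?S. ?x \<in> Q} = {}" by blast
    ultimately show ?thesis using finS by (metis (no_types, lifting) card_Un_disjoint finite_Un)
  qed
  also have "\<dots> = card {Q. valid C2 K D Q \<and> (\<forall>j. (R, j) \<notin> Q)} + card {Q. valid C2 (K - {p}) D Q}"
    using e0 e1 card_image[OF inj] by simp
  finally show ?thesis .
qed

lemma relax_split:
  assumes fin: "finite C" and pK: "p \<in> K"
  shows "card {Q. valid C (K - {p}) D Q} =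
    card {Q. valid C K D Q} + card {Q. valid C (K - {p}) D Q \<and> (\<forall>i. (i, p) \<notin> Q)}"
proof -
  let ?S = "{Q. valid C (K - {p}) D Q}"
  have finS: "finite ?S" using finite_valid[OF fin] .
  have kk: "(\<forall>j\<in>K. P j) \<longleftrightarrow> (\<forall>j\<in>K - {p}. P j) \<and> P p" for P :: "nat \<Rightarrow> bool"
    using pK by blast
  have vv: "valid C K D Q \<longleftrightarrow> valid C (K - {p}) D Q \<and> (\<exists>i. (i, p) \<in> Q)" for Q
    unfolding valid_def kk[of "\<lambda>j. \<exists>i. (i, j) \<in> Q"] by (rule iffI) simp_all
  have a: "{Q. valid C K D Q} = {Q \<in> ?S. \<exists>i. (i, p) \<in> Q}"
    using vv by simp
  have b: "{Q. valid C (K - {p}) D Q \<and> (\<forall>i. (i, p) \<notin> Q)} = {Q \<in> ?S. \<not> (\<exists>i. (i, p) \<in> Q)}"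
    by blast
  have "?S = {Q \<in> ?S. \<exists>i. (i, p) \<in> Q} \<union> {Q \<in> ?S. \<not> (\<exists>i. (i, p) \<in> Q)}" by blast
  moreover have "{Q \<in> ?S. \<exists>i. (i, p) \<in> Q} \<inter> {Q \<in> ?S. \<not> (\<exists>i. (i, p) \<in> Q)} = {}" by blast
  ultimately have cc: "card ?S = card {Q \<in> ?S. \<exists>i. (i, p) \<in> Q} + card {Q \<in> ?S. \<not> (\<exists>i. (i, p) \<in> Q)}"
    using finS by (metis (no_types, lifting) card_Un_disjoint finite_Un)
  show ?thesis unfolding a b by (rule cc)
qed

definition ins :: "nat \<Rightarrow> nat \<Rightarrow> nat" where
  "ins p i = (if i < p then i else Suc i)"

lemma strict_mono_ins: "strict_mono (ins p)"
  by (auto simp: strict_mono_def ins_def)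

lemma range_ins: "range (ins p) = - {p}"
proof (intro set_eqI iffI)
  fix x assume "x \<in> range (ins p)" then show "x \<in> - {p}" by (auto simp: ins_def)
next
  fix x assume x: "x \<in> - {p}"
  show "x \<in> range (ins p)"
  proof (cases "x < p")
    case True then have "ins p x = x" by (simp add: ins_def)
    then show ?thesis by (metis rangeI)
  next
    case False then have "x > p" using x by auto
    then have "ins p (x - 1) = x" by (auto simp: ins_def)
    then show ?thesis by (metis rangeI)
  qed
qed

lemma cellsL_mem: "(i, j) \<in> cellsL l \<longleftrightarrow> i < length l \<and> j < l ! i"
  by (simp add: cellsL_def)

lemma finite_cellsL: "finite (cellsL l)"
proof -
  have "cellsL l \<subseteq> {..<length l} \<times> {..<sum_list l}"
  proof
    fix x assume "x \<in> cellsL l"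
    then obtain i j where x: "x = (i, j)" "i < length l" "j < l ! i" by (auto simp: cellsL_def)
    have "l ! i \<le> sum_list l" using x(2) by (simp add: elem_le_sum_list)
    then show "x \<in> {..<length l} \<times> {..<sum_list l}" using x by auto
  qed
  then show ?thesis by (rule finite_subset) auto
qed

lemma nth_mid: "(A @ x # B) ! i =
   (if i < length A then A ! i else if i = length A then x else B ! (i - Suc (length A)))"
  by (auto simp: nth_append nth_Cons' split: if_splits)

lemma L1: "cellsL (A @ Suc p # B) = insert (length A, p) (cellsL (A @ p # B))"
  by (auto simp: cellsL_def nth_mid less_Suc_eq split: if_splits)

lemma L2: "(length A, p) \<notin> cellsL (A @ p # B)"
  by (simp add: cellsL_def)

lemma L3: "(i, j) \<in> cellsL (A @ B) \<longleftrightarrow> (ins (length A) i, j) \<in> cellsL (A @ x # B)"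
  by (auto simp: cellsL_def ins_def nth_append)

lemma L4:
  assumes pd: "p \<le> d" and len: "length M4 = length M2"
    and rel: "\<And>m. m < length M4 \<Longrightarrow>
       (M2 ! m = Suc (M4 ! m) \<and> p \<le> M4 ! m) \<or> (M2 ! m = M4 ! m \<and> M4 ! m \<le> p)"
  shows "(i, j) \<in> cellsL (map Suc [0..<d] @ M4) \<longleftrightarrow>
         (ins p i, ins p j) \<in> cellsL (map Suc [0..<Suc d] @ M2)"
proof (cases "i < d")
  case True
  then have "ins p i < Suc d" by (auto simp: ins_def)
  moreover have "j < Suc i \<longleftrightarrow> ins p j < Suc (ins p i)"
    by (auto simp: ins_def)
  ultimately show ?thesis using True by (simp add: cellsL_def nth_append del: upt_Suc)
next
  case False
  then have ii: "ins p i = Suc i" using pd by (simp add: ins_def)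
  have "j < M4 ! (i - d) \<longleftrightarrow> ins p j < M2 ! (i - d)" if "i - d < length M4"
    using rel[OF that] by (auto simp: ins_def)
  then show ?thesis using False len by (auto simp: cellsL_def nth_append ii del: upt_Suc)
qed

lemma cornerF:
  assumes C1: "C1 = insert (c, c) C2" and nx: "(c, c) \<notin> C2"
    and ncol: "\<And>i. (i, c) \<notin> C2" and rowR: "\<And>j. (c, j) \<in> C2 \<Longrightarrow> j < c"
  shows "card {Q. valid C1 {..<Suc c} {..<Suc c} Q} = card {Q. valid C2 {..<c} {..<c} Q}"
proof -
  let ?x = "(c, c)"
  have colp: "\<And>i. (i, c) \<in> C2 \<Longrightarrow> i < c" using ncol by blast
  have e: "{Q. valid C1 {..<Suc c} {..<Suc c} Q} = insert ?x ` {Q. valid C2 {..<c} {..<c} Q}"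
  proof (intro set_eqI iffI)
    fix Q assume "Q \<in> {Q. valid C1 {..<Suc c} {..<Suc c} Q}"
    then have v: "valid C1 {..<Suc c} {..<Suc c} Q" by blast
    obtain i where i: "(i, c) \<in> Q" using v unfolding valid_def by blast
    have "(i, c) \<in> C1" using i v unfolding valid_def by blast
    then have xq: "?x \<in> Q" using i ncol C1 by auto
    let ?Q0 = "Q - {?x}"
    have eq: "Q = insert ?x ?Q0" using xq by blast
    have n0: "?x \<notin> ?Q0" by blast
    have sub: "?Q0 \<subseteq> C2" using v C1 unfolding valid_def by blast
    have "rule2 C1 Q" using v unfolding valid_def by blast
    then have "rule2 C2 ?Q0" using corner_rule2[OF n0 colp rowR] eq C1 by metis
    moreover have "\<forall>j\<in>{..<c}. \<exists>i. (i, j) \<in> ?Q0"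
    proof
      fix j assume "j \<in> {..<c}"
      then have "j < Suc c" "j \<noteq> c" by auto
      then obtain i where "(i, j) \<in> Q" using v unfolding valid_def by blast
      then show "\<exists>i. (i, j) \<in> ?Q0" using \<open>j \<noteq> c\<close> by blast
    qed
    moreover have "\<forall>i\<in>{..<c}. (i, i) \<notin> ?Q0 \<longrightarrow> (\<forall>j. (i, j) \<notin> ?Q0)"
    proof (intro ballI impI allI)
      fix i j assume "i \<in> {..<c}" "(i, i) \<notin> ?Q0"
      then have "i < Suc c" "(i, i) \<notin> Q" by auto
      then show "(i, j) \<notin> ?Q0" using v unfolding valid_def by blast
    qed
    ultimately have "valid C2 {..<c} {..<c} ?Q0" using sub unfolding valid_def by blast
    then show "Q \<in> insert ?x ` {Q. valid C2 {..<c} {..<c} Q}" using eq by blast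
  next
    fix Q assume "Q \<in> insert ?x ` {Q. valid C2 {..<c} {..<c} Q}"
    then obtain Q0 where Q: "Q = insert ?x Q0" and v: "valid C2 {..<c} {..<c} Q0" by blast
    have n0: "?x \<notin> Q0" using v nx unfolding valid_def by blast
    have "rule2 C2 Q0" using v unfolding valid_def by blast
    then have "rule2 C1 Q" using corner_rule2[OF n0 colp rowR] Q C1 by metis
    moreover have "Q \<subseteq> C1" using v Q C1 unfolding valid_def by blast
    moreover have "\<forall>j\<in>{..<Suc c}. \<exists>i. (i, j) \<in> Q"
    proof
      fix j assume "j \<in> {..<Suc c}"
      then have "j < c \<or> j = c" by auto
      then show "\<exists>i. (i, j) \<in> Q" using v Q unfolding valid_def by blast
    qed
    moreover have "\<forall>i\<in>{..<Suc c}. (i, i) \<notin> Q \<longrightarrow> (\<forall>j. (i, j) \<notin> Q)"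
    proof (intro ballI impI allI)
      fix i j assume "i \<in> {..<Suc c}" "(i, i) \<notin> Q"
      then have "i < c" "(i, i) \<notin> Q0" using Q by auto
      then show "(i, j) \<notin> Q" using v Q unfolding valid_def by auto
    qed
    ultimately have "valid C1 {..<Suc c} {..<Suc c} Q" unfolding valid_def by blast
    then show "Q \<in> {Q. valid C1 {..<Suc c} {..<Suc c} Q}" by blast
  qed
  have inj: "inj_on (insert ?x) {Q. valid C2 {..<c} {..<c} Q}"
  proof (rule inj_onI)
    fix A B assume "A \<in> {Q. valid C2 {..<c} {..<c} Q}" "B \<in> {Q. valid C2 {..<c} {..<c} Q}"
      "insert ?x A = insert ?x B"
    moreover have "?x \<notin> A" "?x \<notin> B" using calculation nx unfolding valid_def by blast+
    ultimately show "A = B" by (metis insert_ident)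
  qed
  show ?thesis unfolding e by (rule card_image[OF inj])
qed

definition cnt :: "bool list \<Rightarrow> nat" where
  "cnt w = card {Q. is_typeB_tableau w Q}"

lemma cnt_eq: "cnt w = card {Q. valid (cellsL (shifted_rowlens w)) {..<ncols w} {..<ncols w} Q}"
  unfolding cnt_def typeB_valid ..

lemma cellsL_snoc0: "cellsL (l @ [0]) = cellsL l"
  by (auto simp: cellsL_def nth_append less_Suc_eq split: if_splits)

lemma cnt_snocS: "cnt (u @ [True]) = cnt u"
proof -
  have "shifted_rowlens (u @ [True]) = shifted_rowlens u @ [0]"
    by (simp add: shifted_rowlens_eq)
  then show ?thesis unfolding cnt_eq by (simp add: cellsL_snoc0)
qed

lemma ferrers_nth_le: "m < length (ferrers_rowlens v) \<Longrightarrow> ferrers_rowlens v ! m \<le> ncols v"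
  using ferrers_le nth_mem by blast

lemma cnt_first: "cnt (False # v) = cnt (True # v)"
proof -
  let ?c = "ncols v"
  let ?A = "map Suc [0..<?c]"
  let ?B = "ferrers_rowlens v"
  have r1: "shifted_rowlens (False # v) = ?A @ Suc ?c # ?B" by (simp add: shifted_rowlens_eq)
  have r2: "shifted_rowlens (True # v) = ?A @ ?c # ?B" by (simp add: shifted_rowlens_eq)
  have lA: "length ?A = ?c" by simp
  have C1: "cellsL (?A @ Suc ?c # ?B) = insert (?c, ?c) (cellsL (?A @ ?c # ?B))"
    using L1[of ?A ?c ?B] lA by simp
  have nx: "(?c, ?c) \<notin> cellsL (?A @ ?c # ?B)" using L2[of ?A ?c ?B] lA by simp
  have ncol: "(i, ?c) \<notin> cellsL (?A @ ?c # ?B)" for i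
  proof
    assume "(i, ?c) \<in> cellsL (?A @ ?c # ?B)"
    then have a: "i < length (?A @ ?c # ?B)" "?c < (?A @ ?c # ?B) ! i" by (auto simp: cellsL_def)
    show False
    proof (cases "i < ?c")
      case True then show ?thesis using a by (simp add: nth_mid)
    next
      case False
      then show ?thesis
      proof (cases "i = ?c")
        case True then show ?thesis using a by (simp add: nth_mid)
      next
        case False
        then have "i > ?c" using \<open>\<not> i < ?c\<close> by simp
        then have "(?A @ ?c # ?B) ! i = ?B ! (i - Suc ?c)" "i - Suc ?c < length ?B"
          using a(1) by (auto simp: nth_mid)
        then show ?thesis using a(2) ferrers_nth_le[of "i - Suc ?c" v] by simp
      qed
    qed
  qed
  have rowR: "(?c, j) \<in> cellsL (?A @ ?c # ?B) \<Longrightarrow> j < ?c" for j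
    by (simp add: cellsL_def nth_mid)
  have "card {Q. valid (cellsL (?A @ Suc ?c # ?B)) {..<Suc ?c} {..<Suc ?c} Q} =
        card {Q. valid (cellsL (?A @ ?c # ?B)) {..<?c} {..<?c} Q}"
    by (rule cornerF[OF C1 nx ncol rowR])
  then show ?thesis unfolding cnt_eq r1 r2 by simp
qed

lemma range_map_prod: "range (map_prod f g) = range f \<times> range g"
  using map_prod_surj_on[of f UNIV "range f" g UNIV "range g"] by simp

lemma ins_image_low: "c \<le> R \<Longrightarrow> ins R ` {..<c} = {..<c}"
proof -
  assume cR: "c \<le> R"
  have "ins R i = i" if "i < c" for i using that cR by (simp add: ins_def)
  then show ?thesis by (metis image_cong image_ident lessThan_iff)
qed

lemma ins_image_diff: "p \<le> d \<Longrightarrow> ins p ` {..<d} = {..<Suc d} - {p}"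
proof (intro set_eqI iffI)
  fix x assume "p \<le> d" "x \<in> ins p ` {..<d}"
  then show "x \<in> {..<Suc d} - {p}" by (auto simp: ins_def)
next
  fix x assume pd: "p \<le> d" and x: "x \<in> {..<Suc d} - {p}"
  show "x \<in> ins p ` {..<d}"
  proof (cases "x < p")
    case True
    then have "ins p x = x" "x < d" using pd by (auto simp: ins_def)
    then show ?thesis by (metis imageI lessThan_iff)
  next
    case False
    then have "x > p" using x by auto
    then have "ins p (x - 1) = x" "x - 1 < d" using x by (auto simp: ins_def)
    then show ?thesis by (metis imageI lessThan_iff)
  qed
qed

lemma cnt_swap:
  "cnt (u @ True # False # v) = cnt (u @ False # True # v) + cnt (u @ False # v) + cnt (u @ True # v)"
proof -
  define p where "p = ncols v"
  define a where "a = ncols u"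
  define d where "d = a + p"
  define c where "c = Suc d"
  define St where "St = map Suc [0..<c]"
  define Fu where "Fu = map (\<lambda>x. x + Suc p) (ferrers_rowlens u)"
  define B where "B = ferrers_rowlens v"
  define A where "A = St @ Fu"
  define R where "R = length A"
  define M4 where "M4 = map (\<lambda>x. x + p) (ferrers_rowlens u) @ p # B"
  define C1 where "C1 = cellsL (A @ Suc p # B)"
  define C2 where "C2 = cellsL (A @ p # B)"
  define C3 where "C3 = cellsL (A @ B)"
  define C4 where "C4 = cellsL (map Suc [0..<d] @ M4)"
  define K where "K = {..<c}"
  have r1: "shifted_rowlens (u @ True # False # v) = A @ Suc p # B"
    by (simp add: shifted_rowlens_eq A_def St_def Fu_def B_def c_def d_def a_def p_def)
  have r2: "shifted_rowlens (u @ False # True # v) = A @ p # B"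
    by (simp add: shifted_rowlens_eq A_def St_def Fu_def B_def c_def d_def a_def p_def)
  have r3: "shifted_rowlens (u @ False # v) = A @ B"
    by (simp add: shifted_rowlens_eq A_def St_def Fu_def B_def c_def d_def a_def p_def)
  have r4: "shifted_rowlens (u @ True # v) = map Suc [0..<d] @ M4"
    by (simp add: shifted_rowlens_eq M4_def B_def d_def a_def p_def)
  have n1: "ncols (u @ True # False # v) = c" by (simp add: c_def d_def a_def p_def)
  have n2: "ncols (u @ False # True # v) = c" by (simp add: c_def d_def a_def p_def)
  have n3: "ncols (u @ False # v) = c" by (simp add: c_def d_def a_def p_def)
  have n4: "ncols (u @ True # v) = d" by (simp add: d_def a_def p_def)
  have cnt1: "cnt (u @ True # False # v) = card {Q. valid C1 K K Q}"
    unfolding cnt_eq r1 n1 C1_def K_def ..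
  have cnt2: "cnt (u @ False # True # v) = card {Q. valid C2 K K Q}"
    unfolding cnt_eq r2 n2 C2_def K_def ..
  have cnt3: "cnt (u @ False # v) = card {Q. valid C3 K K Q}"
    unfolding cnt_eq r3 n3 C3_def K_def ..
  have cnt4: "cnt (u @ True # v) = card {Q. valid C4 {..<d} {..<d} Q}"
    unfolding cnt_eq r4 n4 C4_def ..
  have lenSt: "length St = c" by (simp add: St_def)
  have cR: "c \<le> R" by (simp add: R_def A_def lenSt)
  have pc: "p < c" by (simp add: c_def d_def)
  have pd: "p \<le> d" by (simp add: d_def)
  have eC1: "C1 = insert (R, p) C2" unfolding C1_def C2_def R_def by (rule L1)
  have nx: "(R, p) \<notin> C2" unfolding C2_def R_def by (rule L2)
  have Ble: "m < length B \<Longrightarrow> B ! m \<le> p" for m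
    unfolding B_def p_def by (rule ferrers_nth_le)
  have colp: "(i, p) \<in> C2 \<Longrightarrow> i < R" for i
  proof (rule ccontr)
    assume a1: "(i, p) \<in> C2" "\<not> i < R"
    then have a2: "i < length (A @ p # B)" "p < (A @ p # B) ! i" by (auto simp: C2_def cellsL_def)
    show False
    proof (cases "i = R")
      case True then show ?thesis using a2 by (simp add: nth_mid R_def)
    next
      case False
      then have "(A @ p # B) ! i = B ! (i - Suc R)" "i - Suc R < length B"
        using a1(2) a2(1) by (auto simp: nth_mid R_def)
      then show ?thesis using a2(2) Ble by fastforce
    qed
  qed
  have rowR: "(R, j) \<in> C2 \<Longrightarrow> j < p" for j
    by (simp add: C2_def cellsL_def nth_mid R_def)
  have finC1: "finite C1" by (simp add: C1_def finite_cellsL)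
  have finC2: "finite C2" by (simp add: C2_def finite_cellsL)
  have step1: "card {Q. valid C1 K K Q} =
     card {Q. valid C2 K K Q \<and> (\<forall>j. (R, j) \<notin> Q)} + card {Q. valid C2 (K - {p}) K Q}"
    by (rule cornerA[OF eC1 nx colp rowR _ _ finC1]) (use pc cR in \<open>auto simp: K_def\<close>)
  have step2: "card {Q. valid C2 (K - {p}) K Q} =
    card {Q. valid C2 K K Q} + card {Q. valid C2 (K - {p}) K Q \<and> (\<forall>i. (i, p) \<notin> Q)}"
    by (rule relax_split[OF finC2]) (use pc in \<open>simp add: K_def\<close>)
  have step3: "card {Q. valid C2 K K Q \<and> (\<forall>j. (R, j) \<notin> Q)} = card {Q. valid C3 K K Q}"
  proof -
    have rg: "range (map_prod (ins R) id) = (- {R}) \<times> UNIV"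
      by (simp add: range_map_prod range_ins)
    have "{Q. valid C2 K K Q \<and> (\<forall>j. (R, j) \<notin> Q)} =
          {Q. valid C2 K K Q \<and> Q \<subseteq> range (map_prod (ins R) id)}"
      unfolding rg by auto
    also have "card \<dots> = card {Q. valid C3 K K Q}"
    proof (rule card_embed[OF strict_mono_ins strict_mono_id])
      show "(i, j) \<in> C3 \<longleftrightarrow> (ins R i, id j) \<in> C2" for i j
        unfolding C3_def C2_def R_def id_def by (rule L3)
      show "K = id ` K" by simp
      have "ins R ` K = K" unfolding K_def using cR by (rule ins_image_low)
      moreover have "K \<inter> range (ins R) = K" using cR by (auto simp: K_def range_ins)
      ultimately show "K \<inter> range (ins R) = ins R ` K" by simp
      show "i \<in> K \<Longrightarrow> id i = ins R i" for i using cR by (simp add: K_def ins_def)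
    qed
    finally show ?thesis .
  qed
  have step4: "card {Q. valid C2 (K - {p}) K Q \<and> (\<forall>i. (i, p) \<notin> Q)} =
      card {Q. valid C4 {..<d} {..<d} Q}"
  proof -
    have rg: "range (map_prod (ins p) (ins p)) = (- {p}) \<times> (- {p})"
      by (simp add: range_map_prod range_ins)
    have "{Q. valid C2 (K - {p}) K Q \<and> (\<forall>i. (i, p) \<notin> Q)} =
          {Q. valid C2 (K - {p}) K Q \<and> Q \<subseteq> range (map_prod (ins p) (ins p))}"
    proof (intro set_eqI iffI)
      fix Q assume "Q \<in> {Q. valid C2 (K - {p}) K Q \<and> (\<forall>i. (i, p) \<notin> Q)}"
      then have v: "valid C2 (K - {p}) K Q" and col: "\<forall>i. (i, p) \<notin> Q" by auto
      have "p \<in> K" using pc by (simp add: K_def)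
      then have row: "\<forall>j. (p, j) \<notin> Q" using v col unfolding valid_def by blast
      have "Q \<subseteq> (- {p}) \<times> (- {p})"
      proof
        fix x assume "x \<in> Q" then show "x \<in> (- {p}) \<times> (- {p})"
          using row col by (cases x) auto
      qed
      then show "Q \<in> {Q. valid C2 (K - {p}) K Q \<and> Q \<subseteq> range (map_prod (ins p) (ins p))}"
        using v rg by simp
    next
      fix Q assume "Q \<in> {Q. valid C2 (K - {p}) K Q \<and> Q \<subseteq> range (map_prod (ins p) (ins p))}"
      then have v: "valid C2 (K - {p}) K Q" and s: "Q \<subseteq> (- {p}) \<times> (- {p})" using rg by auto
      have "\<forall>i. (i, p) \<notin> Q" using s by blast
      then show "Q \<in> {Q. valid C2 (K - {p}) K Q \<and> (\<forall>i. (i, p) \<notin> Q)}" using v by simp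
    qed
    also have "card \<dots> = card {Q. valid C4 {..<d} {..<d} Q}"
    proof (rule card_embed[OF strict_mono_ins strict_mono_ins])
      have len: "length M4 = length (Fu @ p # B)" by (simp add: M4_def Fu_def)
      have rel: "((Fu @ p # B) ! m = Suc (M4 ! m) \<and> p \<le> M4 ! m) \<or>
                 ((Fu @ p # B) ! m = M4 ! m \<and> M4 ! m \<le> p)" if m: "m < length M4" for m
      proof (cases "m < length (ferrers_rowlens u)")
        case True
        then show ?thesis by (simp add: M4_def Fu_def nth_append)
      next
        case False
        then have e1: "M4 ! m = (p # B) ! (m - length (ferrers_rowlens u))"
          and e2: "(Fu @ p # B) ! m = (p # B) ! (m - length (ferrers_rowlens u))"
          by (simp_all add: M4_def Fu_def nth_append)
        have "(p # B) ! (m - length (ferrers_rowlens u)) \<le> p"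
        proof (cases "m - length (ferrers_rowlens u)")
          case 0 then show ?thesis by simp
        next
          case (Suc k)
          then have "k < length B" using m False by (simp add: M4_def)
          then show ?thesis using Suc Ble by simp
        qed
        then show ?thesis using e1 e2 by simp
      qed
      have "C2 = cellsL (map Suc [0..<Suc d] @ Fu @ p # B)"
        by (simp add: C2_def A_def St_def c_def del: upt_Suc)
      then show "(i, j) \<in> C4 \<longleftrightarrow> (ins p i, ins p j) \<in> C2" for i j
        unfolding C4_def using L4[OF pd len rel] by simp
      show "K - {p} = ins p ` {..<d}" using ins_image_diff[OF pd] by (simp add: K_def c_def)
      show "K \<inter> range (ins p) = ins p ` {..<d}" using ins_image_diff[OF pd]
        by (auto simp: K_def c_def range_ins)
      show "i \<in> {..<d} \<Longrightarrow> ins p i = ins p i" for i by simp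
    qed
    finally show ?thesis .
  qed
  show ?thesis using cnt1 cnt2 cnt3 cnt4 step1 step2 step3 step4 by simp
qed

definition words :: "nat \<Rightarrow> bool list set" where
  "words n = {w. length w = n}"

lemma words_0: "words 0 = {[]}" by (auto simp: words_def)

lemma words_Suc: "words (Suc n) = Cons True ` words n \<union> Cons False ` words n"
proof (intro set_eqI iffI)
  fix w assume "w \<in> words (Suc n)"
  then obtain b w' where "w = b # w'" "length w' = n" by (auto simp: words_def length_Suc_conv)
  then show "w \<in> Cons True ` words n \<union> Cons False ` words n"
    by (cases b) (auto simp: words_def)
next
  fix w assume "w \<in> Cons True ` words n \<union> Cons False ` words n"
  then show "w \<in> words (Suc n)" by (auto simp: words_def)
qed

lemma finite_words: "finite (words n)"
  by (induction n) (simp_all add: words_0 words_Suc)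

lemma sum_hsplit: "(\<Sum>w\<in>words (Suc n). g w) = (\<Sum>w\<in>words n. g (True # w) + g (False # w))"
proof -
  have d: "Cons True ` words n \<inter> Cons False ` words n = {}" by auto
  have "(\<Sum>w\<in>words (Suc n). g w) = (\<Sum>w\<in>Cons True ` words n. g w) + (\<Sum>w\<in>Cons False ` words n. g w)"
    unfolding words_Suc by (rule sum.union_disjoint) (simp_all add: finite_words d)
  also have "\<dots> = (\<Sum>w\<in>words n. g (True # w)) + (\<Sum>w\<in>words n. g (False # w))"
    by (simp add: sum.reindex)
  also have "\<dots> = (\<Sum>w\<in>words n. g (True # w) + g (False # w))"
    by (simp add: sum.distrib)
  finally show ?thesis .
qed

lemma sum_app: "(\<Sum>w\<in>words (a + b). f w) = (\<Sum>u\<in>words a. \<Sum>v\<in>words b. f (u @ v))"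
proof (induction a arbitrary: f)
  case 0
  then show ?case by (simp add: words_0)
next
  case (Suc a)
  have "(\<Sum>w\<in>words (Suc a + b). f w) = (\<Sum>w\<in>words (a + b). f (True # w) + f (False # w))"
    using sum_hsplit[where n="a + b" and g=f] by simp
  also have "\<dots> = (\<Sum>w\<in>words (a + b). f (True # w)) + (\<Sum>w\<in>words (a + b). f (False # w))"
    by (simp add: sum.distrib)
  also have "\<dots> = (\<Sum>u\<in>words a. \<Sum>v\<in>words b. f (True # u @ v)) +
                  (\<Sum>u\<in>words a. \<Sum>v\<in>words b. f (False # u @ v))"
    using Suc.IH[of "\<lambda>w. f (True # w)"] Suc.IH[of "\<lambda>w. f (False # w)"] by simp
  also have "\<dots> = (\<Sum>u\<in>words a. (\<Sum>v\<in>words b. f (True # u @ v)) + (\<Sum>v\<in>words b. f (False # u @ v)))"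
    by (simp add: sum.distrib)
  also have "\<dots> = (\<Sum>u\<in>words (Suc a). \<Sum>v\<in>words b. f (u @ v))"
    using sum_hsplit[where n=a and g="\<lambda>u. \<Sum>v\<in>words b. f (u @ v)"] by simp
  finally show ?case .
qed

lemma sum_lsplit: "(\<Sum>u\<in>words (Suc a). g u) = (\<Sum>u\<in>words a. g (u @ [True]) + g (u @ [False]))"
proof -
  have w1: "words (Suc 0) = {[True], [False]}"
    using words_Suc[of 0] by (auto simp: words_0)
  have "(\<Sum>u\<in>words (a + 1). g u) = (\<Sum>u\<in>words a. \<Sum>v\<in>words 1. g (u @ v))"
    by (rule sum_app)
  then show ?thesis by (simp add: w1)
qed

definition Tot :: "nat \<Rightarrow> nat" where "Tot n = (\<Sum>w\<in>words n. cnt w)"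
definition PT :: "nat \<Rightarrow> nat \<Rightarrow> nat" where
  "PT a b = (\<Sum>u\<in>words a. \<Sum>v\<in>words b. cnt (u @ True # v))"
definition PF :: "nat \<Rightarrow> nat \<Rightarrow> nat" where
  "PF a b = (\<Sum>u\<in>words a. \<Sum>v\<in>words b. cnt (u @ False # v))"
definition PTT :: "nat \<Rightarrow> nat \<Rightarrow> nat" where
  "PTT a b = (\<Sum>u\<in>words a. \<Sum>v\<in>words b. cnt (u @ True # True # v))"
definition PTF :: "nat \<Rightarrow> nat \<Rightarrow> nat" where
  "PTF a b = (\<Sum>u\<in>words a. \<Sum>v\<in>words b. cnt (u @ True # False # v))"
definition PFT :: "nat \<Rightarrow> nat \<Rightarrow> nat" where
  "PFT a b = (\<Sum>u\<in>words a. \<Sum>v\<in>words b. cnt (u @ False # True # v))"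

lemma PT_Suc2: "PT a (Suc b) = PTT a b + PTF a b"
  unfolding PT_def PTT_def PTF_def sum_hsplit by (simp add: sum.distrib)

lemma PT_Suc1: "PT (Suc a) b = PTT a b + PFT a b"
  unfolding PT_def PTT_def PFT_def sum_lsplit by (simp add: sum.distrib)

lemma PTF_eq: "PTF a b = PFT a b + PF a b + PT a b"
  unfolding PTF_def PFT_def PF_def PT_def by (simp add: cnt_swap sum.distrib)

lemma Tot_split: "Tot (a + Suc b) = PT a b + PF a b"
  unfolding Tot_def PT_def PF_def sum_app sum_hsplit by (simp add: sum.distrib)

lemma Tot_split': "Tot (Suc (a + b)) = PT a b + PF a b"
  using Tot_split[of a b] by simp

lemma PT_0: "PT a 0 = Tot a"
  unfolding PT_def Tot_def by (simp add: words_0 cnt_snocS)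

lemma PF_0_eq: "PF 0 b = PT 0 b"
  unfolding PT_def PF_def by (simp add: words_0 cnt_first)

lemma PT_formula: "j \<le> m \<Longrightarrow> PT (m - j) j = (j + 1) * Tot m"
proof (induction j)
  case 0 then show ?case by (simp add: PT_0)
next
  case (Suc j)
  define a where "a = m - Suc j"
  have ma: "m - j = Suc a" using Suc.prems by (simp add: a_def)
  have am: "a + Suc j = m" using Suc.prems by (simp add: a_def)
  have "PT (m - Suc j) (Suc j) = PT a (Suc j)" by (simp add: a_def)
  also have "\<dots> = PTT a j + PFT a j + PF a j + PT a j" by (simp add: PT_Suc2 PTF_eq)
  also have "\<dots> = PT (Suc a) j + Tot (a + Suc j)" by (simp add: PT_Suc1 Tot_split')
  also have "\<dots> = (j + 1) * Tot m + Tot m" using Suc.IH Suc.prems ma am by simp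
  finally show ?case by simp
qed

lemma Tot_Suc: "Tot (Suc m) = 2 * (m + 1) * Tot m"
proof -
  have "Tot (Suc m) = PT 0 m + PF 0 m" using Tot_split[of 0 m] by simp
  also have "\<dots> = 2 * PT 0 m" by (simp add: PF_0_eq)
  also have "\<dots> = 2 * ((m + 1) * Tot m)" using PT_formula[of m m] by simp
  finally show ?thesis by simp
qed

lemma cnt_Nil: "cnt [] = 1"
proof -
  have "shifted_rowlens [] = []" by (simp add: shifted_rowlens_eq)
  moreover have "cellsL [] = {}" by (simp add: cellsL_def)
  moreover have "{Q. valid {} {} {} Q} = {{}}" by (auto simp: valid_def rule2_def)
  ultimately show ?thesis unfolding cnt_eq by simp
qed

lemma Tot_pos: "Tot m > 0"
proof (induction m)
  case 0 then show ?case by (simp add: Tot_def words_0 cnt_Nil)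
next
  case (Suc m) then show ?case by (simp add: Tot_Suc)
qed

lemma finite_tab: "finite {Q. is_typeB_tableau w Q}"
  unfolding typeB_valid by (rule finite_valid) (rule finite_cellsL)

lemma typeB_Sigma: "typeB_tableaux n = Sigma (words n) (\<lambda>w. {Q. is_typeB_tableau w Q})"
  by (auto simp: typeB_tableaux_def words_def)

lemma card_all: "card (typeB_tableaux n) = Tot n"
  unfolding typeB_Sigma Tot_def cnt_def
  by (rule card_SigmaI) (simp_all add: finite_words finite_tab)

lemma card_S:
  assumes "1 \<le> k" "k \<le> n"
  shows "card {T \<in> typeB_tableaux n. fst T ! (k - 1)} = PT (k - 1) (n - k)"
proof -
  have e: "{T \<in> typeB_tableaux n. fst T ! (k - 1)} =
      Sigma {w \<in> words n. w ! (k - 1)} (\<lambda>w. {Q. is_typeB_tableau w Q})"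
    by (auto simp: typeB_tableaux_def words_def)
  have "card {T \<in> typeB_tableaux n. fst T ! (k - 1)} = (\<Sum>w\<in>{w \<in> words n. w ! (k - 1)}. cnt w)"
    unfolding e cnt_def by (rule card_SigmaI) (simp_all add: finite_words finite_tab)
  also have "\<dots> = (\<Sum>w\<in>words n. if w ! (k - 1) then cnt w else 0)"
    by (rule sum.inter_filter[OF finite_words])
  also have "\<dots> = (\<Sum>w\<in>words ((k - 1) + Suc (n - k)). if w ! (k - 1) then cnt w else 0)"
    using assms by (simp add: Suc_diff_le)
  also have "\<dots> = (\<Sum>u\<in>words (k - 1). \<Sum>v\<in>words (Suc (n - k)).
                     if (u @ v) ! (k - 1) then cnt (u @ v) else 0)"
    by (rule sum_app)
  also have "\<dots> = (\<Sum>u\<in>words (k - 1). \<Sum>v\<in>words (Suc (n - k)). if v ! 0 then cnt (u @ v) else 0)"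
    by (intro sum.cong refl) (simp add: words_def nth_append)
  also have "\<dots> = PT (k - 1) (n - k)"
    unfolding PT_def sum_hsplit by simp
  finally show ?thesis .
qed

theorem mainTheorem3:
  fixes n k :: nat
  assumes "1 \<le> k" and "k \<le> n"
  shows "prob_S n k = (1 / 2) * (1 - (real k - 1) / real n)"
proof -
  define m where "m = n - 1"
  have n: "n = Suc m" using assms by (simp add: m_def)
  have N: "PT (k - 1) (n - k) = (n - k + 1) * Tot m"
    using PT_formula[of "n - k" m] assms by (simp add: m_def)
  have T: "Tot n = 2 * n * Tot m" using Tot_Suc[of m] n by simp
  have pos: "real (Tot m) > 0" using Tot_pos[of m] by simp
  have "prob_S n k = real ((n - k + 1) * Tot m) / real (2 * n * Tot m)"
    unfolding prob_S_def card_all card_S[OF assms] N T ..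
  also have "\<dots> = (real (n - k + 1) * real (Tot m)) / (real (2 * n) * real (Tot m))"
    by (simp only: of_nat_mult)
  also have "\<dots> = real (n - k + 1) / real (2 * n)"
    using pos by simp
  also have "\<dots> = (1 / 2) * (1 - (real k - 1) / real n)"
  proof -
    have r: "real (n - k + 1) = real n - real k + 1" using assms by (simp add: of_nat_diff)
    have np: "real n > 0" using assms by simp
    show ?thesis unfolding r using np by (simp add: field_simps)
  qed
  finally show ?thesis .
qed

end
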